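(* Consider the graph orientation problem with arbitrary query costs, and let $1\le\alpha\le2$. Suppose \textsc{Threshold} with parameter $d\in(0,1]$ uses, in step 4, an algorithm that always returns a vertex cover of weight at most $\alpha$ times the minimum weight of a vertex cover of $G[V_{1/2}]$. Then for every instance, $\mathbb E[\textsc{Threshold}]\le\max\{\frac1d,\ \alpha+(2-\alpha)d\}\cdot\mathbb E[\mathrm{OPT}]$. In particular, with $d=2/(\alpha+\sqrt{8-\alpha(4-\alpha)})$, \textsc{Threshold} has competitive ratio at most $\frac12\big(\alpha+\sqrt{8-\alpha(4-\alpha)}\big)$.
   Context: An instance of the graph orientation problem consists of a graph $G=(V,E)$ and, for each vertex $v$, a query cost $c_v\ge0$ and a continuous distribution $d_v$ with minimal support interval $I_v=(\ell_v,r_v)$; it is assumed that $I_u\cap I_v\ne\emptyset$ for each edge $\{u,v\}$ and that neither interval of an edge is contained in the other. Weights $w_v\sim d_v$ are independent and querying $v$ reveals $w_v$ at cost $c_v$; $c(S)=\sum_{v\in S}c_v$. For a realization, $Q$ is a feasible query set if knowing $w_u$ for $u\in Q$ and only the intervals for unqueried vertices suffices to identify, for every edge, its endpoint of minimum weight; $\mathbb E[\mathrm{OPT}]$ is the expected minimum cost of a feasible query set. A vertex is mandatory for a realization if it belongs to every feasible query set; $p_v$ is the probability that $v$ is mandatory (for graphs, $p_v=1-\prod_{u:\{u,v\}\in E}\mathbb P[w_u\notin I_v]$). Algorithm \textsc{Threshold} with parameter $d\in[0,1]$: (1) let $M=\{v:p_v\ge d\}$; (2) compute an optimal basic feasible solution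 $x^*$ of the LP $\min\sum c_vx_v$ s.t. $x_u+x_v\ge1$ for every edge $\{u,v\}$ of $G[V\setminus M]$, $x\ge0$ (such solutions are half-integral); (3) let $V_1,V_{1/2},V_0$ be the vertices of $V\setminus M$ with $x^*_v=1,\frac12,0$ respectively; (4) compute a vertex cover $VC'$ of $G[V_{1/2}]$ with the given approximation algorithm; (5) query $Q=M\cup V_1\cup VC'$; (6) then query every vertex of $V\setminus Q$ that is mandatory (this is determined after step 5). $\mathbb E[\textsc{Threshold}]$ is its expected query cost. *)

theory Defs
  imports "HOL-Probability.Probability"
begin

text \<open>Vertices form a finite type 'v; the graph is given by its edge set E of
  2-element vertex sets. Vertex v has interval (l v, r v), query cost c v and
  weight distribution D v. A realization is a function w :: 'v => real; the
  joint law of independent weights is the product measure PiM UNIV D.\<close>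

definition go_instance ::
  "'v set set \<Rightarrow> ('v \<Rightarrow> real) \<Rightarrow> ('v \<Rightarrow> real) \<Rightarrow> ('v \<Rightarrow> real) \<Rightarrow> ('v \<Rightarrow> real measure) \<Rightarrow> bool" where
  "go_instance E l r c D \<longleftrightarrow>
     (\<forall>e\<in>E. card e = 2) \<and>
     (\<forall>v. 0 \<le> c v) \<and>
     (\<forall>v. l v < r v) \<and>
     (\<forall>v. prob_space (D v) \<and> sets (D v) = sets borel \<and>
          (\<forall>x. measure (D v) {x} = 0) \<and>
          measure (D v) {l v<..<r v} = 1 \<and>
          (\<forall>a. l v < a \<and> a < r v \<longrightarrow>
                0 < measure (D v) {l v<..a} \<and> 0 < measure (D v) {a..<r v})) \<and>
     (\<forall>u v. {u, v} \<in> E \<longrightarrow>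
          max (l u) (l v) < min (r u) (r v) \<and>
          \<not> {l u<..<r u} \<subseteq> {l v<..<r v} \<and> \<not> {l v<..<r v} \<subseteq> {l u<..<r u})"

definition consistent ::
  "('v \<Rightarrow> real) \<Rightarrow> ('v \<Rightarrow> real) \<Rightarrow> 'v set \<Rightarrow> ('v \<Rightarrow> real) \<Rightarrow> ('v \<Rightarrow> real) \<Rightarrow> bool" where
  "consistent l r Q w w' \<longleftrightarrow>
     (\<forall>v. (v \<in> Q \<longrightarrow> w' v = w v) \<and> (v \<notin> Q \<longrightarrow> l v < w' v \<and> w' v < r v))"

definition feasible_query ::
  "'v set set \<Rightarrow> ('v \<Rightarrow> real) \<Rightarrow> ('v \<Rightarrow> real) \<Rightarrow> ('v \<Rightarrow> real) \<Rightarrow> 'v set \<Rightarrow> bool" where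
  "feasible_query E l r w Q \<longleftrightarrow>
     (\<forall>e\<in>E. \<exists>x\<in>e. \<forall>w'. consistent l r Q w w' \<longrightarrow> (\<forall>y\<in>e. w' x \<le> w' y))"

definition mandatory ::
  "'v set set \<Rightarrow> ('v \<Rightarrow> real) \<Rightarrow> ('v \<Rightarrow> real) \<Rightarrow> ('v \<Rightarrow> real) \<Rightarrow> 'v \<Rightarrow> bool" where
  "mandatory E l r w v \<longleftrightarrow> (\<forall>Q. feasible_query E l r w Q \<longrightarrow> v \<in> Q)"

definition opt_cost ::
  "'v set set \<Rightarrow> ('v \<Rightarrow> real) \<Rightarrow> ('v \<Rightarrow> real) \<Rightarrow> ('v \<Rightarrow> real) \<Rightarrow> ('v \<Rightarrow> real) \<Rightarrow> real" where
  "opt_cost E l r c w = Min (sum c ` {Q. feasible_query E l r w Q})"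

definition prob_mandatory ::
  "'v set set \<Rightarrow> ('v \<Rightarrow> real) \<Rightarrow> ('v \<Rightarrow> real) \<Rightarrow> ('v \<Rightarrow> real measure) \<Rightarrow> 'v \<Rightarrow> real" where
  "prob_mandatory E l r D v = measure (PiM UNIV D) {w. mandatory E l r w v}"

text \<open>The LP  min sum c_v x_v  s.t. x_u + x_v >= 1 for edges of G[S], x >= 0,
  with variables indexed by S (x is 0 outside S).\<close>
definition lp_feasible :: "'v set set \<Rightarrow> 'v set \<Rightarrow> ('v \<Rightarrow> real) \<Rightarrow> bool" where
  "lp_feasible E S x \<longleftrightarrow>
     (\<forall>v\<in>S. 0 \<le> x v) \<and> (\<forall>u v. {u, v} \<in> E \<and> u \<in> S \<and> v \<in> S \<longrightarrow> 1 \<le> x u + x v)"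

text \<open>Basic feasible solution = vertex (extreme point) of the feasible polyhedron.\<close>
definition lp_basic_feasible :: "'v set set \<Rightarrow> 'v set \<Rightarrow> ('v \<Rightarrow> real) \<Rightarrow> bool" where
  "lp_basic_feasible E S x \<longleftrightarrow>
     lp_feasible E S x \<and> (\<forall>v. v \<notin> S \<longrightarrow> x v = 0) \<and>
     (\<forall>y. (\<forall>v. v \<notin> S \<longrightarrow> y v = 0) \<and> lp_feasible E S (\<lambda>v. x v + y v)
            \<and> lp_feasible E S (\<lambda>v. x v - y v) \<longrightarrow> y = (\<lambda>_. 0))"

definition lp_optimal_bfs ::
  "'v set set \<Rightarrow> ('v \<Rightarrow> real) \<Rightarrow> 'v set \<Rightarrow> ('v \<Rightarrow> real) \<Rightarrow> bool" where
  "lp_optimal_bfs E c S x \<longleftrightarrow>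
     lp_basic_feasible E S x \<and>
     (\<forall>x'. lp_feasible E S x' \<longrightarrow> (\<Sum>v\<in>S. c v * x v) \<le> (\<Sum>v\<in>S. c v * x' v))"

definition vertex_cover :: "'v set set \<Rightarrow> 'v set \<Rightarrow> 'v set \<Rightarrow> bool" where
  "vertex_cover E S C \<longleftrightarrow>
     C \<subseteq> S \<and> (\<forall>u v. {u, v} \<in> E \<and> u \<in> S \<and> v \<in> S \<longrightarrow> u \<in> C \<or> v \<in> C)"

definition threshold_steps ::
  "'v set set \<Rightarrow> ('v \<Rightarrow> real) \<Rightarrow> ('v \<Rightarrow> real) \<Rightarrow> ('v \<Rightarrow> real) \<Rightarrow> ('v \<Rightarrow> real measure)
   \<Rightarrow> real \<Rightarrow> real \<Rightarrow> ('v \<Rightarrow> real) \<Rightarrow> 'v set \<Rightarrow> 'v set \<Rightarrow> bool" where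
  "threshold_steps E l r c D \<alpha> d x VC Q \<longleftrightarrow>
     (let M = {v. d \<le> prob_mandatory E l r D v};
          S = - M;
          Vhalf = {v\<in>S. x v = 1/2};
          V1 = {v\<in>S. x v = 1}
      in lp_optimal_bfs E c S x \<and> vertex_cover E Vhalf VC \<and>
         (\<forall>C. vertex_cover E Vhalf C \<longrightarrow> sum c VC \<le> \<alpha> * sum c C) \<and>
         Q = M \<union> V1 \<union> VC)"

text \<open>Total cost of Threshold in realization w: step 5 queries Q, step 6 queries
  all mandatory vertices outside Q.\<close>
definition threshold_cost ::
  "'v set set \<Rightarrow> ('v \<Rightarrow> real) \<Rightarrow> ('v \<Rightarrow> real) \<Rightarrow> ('v \<Rightarrow> real) \<Rightarrow> 'v set \<Rightarrow> ('v \<Rightarrow> real) \<Rightarrow> real" where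
  "threshold_cost E l r c Q w = sum c Q + sum c {v. v \<notin> Q \<and> mandatory E l r w v}"

definition expected_threshold ::
  "'v set set \<Rightarrow> ('v \<Rightarrow> real) \<Rightarrow> ('v \<Rightarrow> real) \<Rightarrow> ('v \<Rightarrow> real) \<Rightarrow> ('v \<Rightarrow> real measure) \<Rightarrow> 'v set \<Rightarrow> real" where
  "expected_threshold E l r c D Q = (\<integral>w. threshold_cost E l r c Q w \<partial>(PiM UNIV D))"

definition expected_opt ::
  "'v set set \<Rightarrow> ('v \<Rightarrow> real) \<Rightarrow> ('v \<Rightarrow> real) \<Rightarrow> ('v \<Rightarrow> real) \<Rightarrow> ('v \<Rightarrow> real measure) \<Rightarrow> real" where
  "expected_opt E l r c D = (\<integral>w. opt_cost E l r c w \<partial>(PiM UNIV D))"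

end

theory Submission
  imports Defs
begin

definition hi :: "'v set \<Rightarrow> ('v \<Rightarrow> real) \<Rightarrow> ('v \<Rightarrow> real) \<Rightarrow> 'v \<Rightarrow> real" where
  "hi Q r w x = (if x \<in> Q then w x else r x)"
definition lo :: "'v set \<Rightarrow> ('v \<Rightarrow> real) \<Rightarrow> ('v \<Rightarrow> real) \<Rightarrow> 'v \<Rightarrow> real" where
  "lo Q l w x = (if x \<in> Q then w x else l x)"

lemma consistent_le_iff:
  assumes lr: "\<And>v. l v < r v" and xy: "x \<noteq> y"
  shows "(\<forall>w'. consistent l r Q w w' \<longrightarrow> w' x \<le> w' y) \<longleftrightarrow> hi Q r w x \<le> lo Q l w y"
proof
  assume H: "\<forall>w'. consistent l r Q w w' \<longrightarrow> w' x \<le> w' y"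
  show "hi Q r w x \<le> lo Q l w y"
  proof (rule ccontr)
    assume C: "\<not> hi Q r w x \<le> lo Q l w y"
    define L where "L = lo Q l w y"
    define X where "X = (if x \<in> Q then w x else (max (l x) L + r x) / 2)"
    have X1: "x \<notin> Q \<Longrightarrow> l x < X \<and> X < r x" using C lr[of x] unfolding X_def hi_def L_def
      by (auto simp: max_def)
    have X2: "L < X" using C lr[of x] unfolding X_def hi_def L_def by (auto simp: max_def)
    define Y where "Y = (if y \<in> Q then w y else (l y + min X (r y)) / 2)"
    have Y1: "y \<notin> Q \<Longrightarrow> l y < Y \<and> Y < r y" using X2 lr[of y] unfolding Y_def L_def lo_def
      by (auto simp: min_def)
    have Y2: "Y < X" using X2 lr[of y] unfolding Y_def L_def lo_def by (auto simp: min_def)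
    define w' where "w' = (\<lambda>v. if v \<in> Q then w v else if v = x then X else if v = y then Y
                          else (l v + r v) / 2)"
    have "consistent l r Q w w'"
      unfolding consistent_def w'_def using X1 Y1 lr xy by auto
    moreover have "w' x = X" "w' y = Y" using xy unfolding w'_def X_def Y_def by auto
    ultimately show False using H Y2 by force
  qed
next
  assume H: "hi Q r w x \<le> lo Q l w y"
  show "\<forall>w'. consistent l r Q w w' \<longrightarrow> w' x \<le> w' y"
  proof (intro allI impI)
    fix w' assume "consistent l r Q w w'"
    then have a: "w' x \<le> hi Q r w x" and b: "lo Q l w y \<le> w' y"
      unfolding consistent_def hi_def lo_def by (auto simp: less_imp_le)
    show "w' x \<le> w' y" using a b H by linarith
  qed
qed

lemma feasible_char:
  assumes lr: "\<And>v. l v < r v"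
  shows "feasible_query E l r w Q \<longleftrightarrow>
    (\<forall>e\<in>E. \<exists>x\<in>e. \<forall>y\<in>e. x = y \<or> hi Q r w x \<le> lo Q l w y)"
proof -
  have 1: "\<And>x y. (\<forall>w'. consistent l r Q w w' \<longrightarrow> w' x \<le> w' y) \<longleftrightarrow> (x = y \<or> hi Q r w x \<le> lo Q l w y)"
    subgoal for x y by (cases "x = y") (simp_all add: consistent_le_iff[OF lr])
    done
  have 2: "\<And>x e. (\<forall>w'. consistent l r Q w w' \<longrightarrow> (\<forall>y\<in>e. w' x \<le> w' y)) \<longleftrightarrow>
     (\<forall>y\<in>e. \<forall>w'. consistent l r Q w w' \<longrightarrow> w' x \<le> w' y)" by auto
  have "\<And>x e. (\<forall>w'. consistent l r Q w w' \<longrightarrow> (\<forall>y\<in>e. w' x \<le> w' y)) \<longleftrightarrow>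
     (\<forall>y\<in>e. x = y \<or> hi Q r w x \<le> lo Q l w y)"
    unfolding 2 1 by (rule refl)
  then show ?thesis unfolding feasible_query_def by simp
qed

lemma go_lr: "go_instance E l r c D \<Longrightarrow> l v < r v"
  unfolding go_instance_def by auto

lemma edge2: "go_instance E l r c D \<Longrightarrow> e \<in> E \<Longrightarrow> \<exists>u v. u \<noteq> v \<and> e = {u, v}"
proof -
  assume "go_instance E l r c D" "e \<in> E"
  then have "card e = 2" unfolding go_instance_def by blast
  then obtain u v where "e = {u, v}" "u \<noteq> v" unfolding card_2_iff by blast
  then show ?thesis by blast
qed

lemma feasible_cover:
  assumes G: "go_instance E l r c D" and F: "feasible_query E l r w Q" and e: "{u, v} \<in> E"
  shows "u \<in> Q \<or> v \<in> Q"
proof (rule ccontr)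
  assume N: "\<not> (u \<in> Q \<or> v \<in> Q)"
  have ov: "max (l u) (l v) < min (r u) (r v)" using G e unfolding go_instance_def by blast
  have "u \<noteq> v" using G e unfolding go_instance_def by force
  from F[unfolded feasible_char[OF go_lr[OF G]]] e obtain x where
    "x \<in> {u, v}" "\<forall>y\<in>{u,v}. x = y \<or> hi Q r w x \<le> lo Q l w y" by blast
  then show False using N ov \<open>u \<noteq> v\<close> unfolding hi_def lo_def by auto
qed

lemma UNIV_feasible:
  assumes G: "go_instance E l r c D"
  shows "feasible_query E l r w UNIV"
  unfolding feasible_char[OF go_lr[OF G]]
proof
  fix e assume "e \<in> E"
  then obtain u v where "e = {u, v}" using edge2[OF G] by blast
  then show "\<exists>x\<in>e. \<forall>y\<in>e. x = y \<or> hi UNIV r w x \<le> lo UNIV l w y"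
    unfolding hi_def lo_def by (cases "w u \<le> w v") auto
qed

lemma sets_N: "go_instance E l r c D \<Longrightarrow> sets (PiM UNIV D) = sets (PiM UNIV (\<lambda>_. borel :: real measure))"
  by (rule sets_PiM_cong) (auto simp: go_instance_def)

lemma comp_meas[measurable]: "(\<lambda>w. w i) \<in> borel_measurable (PiM UNIV (\<lambda>_::'v::finite. borel :: real measure))"
  by (rule measurable_component_singleton) simp

lemma hi_meas: "(\<lambda>w. hi Q r w x) \<in> borel_measurable (PiM UNIV (\<lambda>_::'v::finite. borel :: real measure))"
  unfolding hi_def by (cases "x \<in> Q") (simp_all add: comp_meas)

lemma lo_meas: "(\<lambda>w. lo Q l w x) \<in> borel_measurable (PiM UNIV (\<lambda>_::'v::finite. borel :: real measure))"
  unfolding lo_def by (cases "x \<in> Q") (simp_all add: comp_meas)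

lemma pred_hl: "Measurable.pred (PiM UNIV (\<lambda>_::'v::finite. borel :: real measure)) (\<lambda>w. x = y \<or> hi Q r w x \<le> lo Q l w y)"
proof (cases "x = y")
  case True then show ?thesis by (simp add: measurable_const)
next
  case False
  have "{w \<in> space (PiM UNIV (\<lambda>_::'v::finite. borel :: real measure)). hi Q r w x \<le> lo Q l w y} \<in> sets (PiM UNIV (\<lambda>_::'v::finite. borel :: real measure))"
    by (rule borel_measurable_le[OF hi_meas lo_meas])
  then show ?thesis using False unfolding pred_def by simp
qed

lemma feasible_pred:
  assumes G: "go_instance E l r c D"
  shows "{w \<in> space (PiM UNIV (\<lambda>_::'v::finite. borel :: real measure)). feasible_query E l r w Q}
     \<in> sets (PiM UNIV (\<lambda>_. borel))"
proof -
  have fin: "finite E" by simp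
  have "Measurable.pred (PiM UNIV (\<lambda>_::'v. borel :: real measure)) (\<lambda>w. \<forall>e\<in>E. \<exists>x\<in>e. \<forall>y\<in>e. x = y \<or> hi Q r w x \<le> lo Q l w y)"
  proof -
    note h = pred_hl[where 'v='v]
    show ?thesis
      by (rule pred_intros_finite(3), simp, rule pred_intros_finite(4), simp, rule pred_intros_finite(3), simp, rule h)
  qed
  then have "{w \<in> space (PiM UNIV (\<lambda>_::'v::finite. borel :: real measure)). \<forall>e\<in>E. \<exists>x\<in>e. \<forall>y\<in>e. x = y \<or> hi Q r w x \<le> lo Q l w y}
     \<in> sets (PiM UNIV (\<lambda>_. borel))" by (rule predE)
  then show ?thesis by (subst feasible_char[OF go_lr[OF G]])
qed


definition zf :: "('v::finite set \<Rightarrow> bool) \<Rightarrow> 'v \<Rightarrow> real" where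
  "zf P v = (\<Sum>Q\<in>UNIV. if P Q \<and> v \<in> Q then 1 else 0) / (\<Sum>Q\<in>UNIV. if P Q then 1 else 0)"

lemma zf_sum:
  "(\<Sum>v\<in>A. a v * zf P v) =
     (\<Sum>Q\<in>UNIV. if P Q then sum a (A \<inter> Q) else 0) / (\<Sum>Q\<in>UNIV. if P Q then 1 else (0::real))"
proof -
  have "(\<Sum>v\<in>A. a v * zf P v) = (\<Sum>v\<in>A. \<Sum>Q\<in>UNIV. (if P Q \<and> v \<in> Q then a v else 0)) / (\<Sum>Q\<in>UNIV. if P Q then 1 else (0::real))"
    unfolding zf_def sum_divide_distrib
    by (intro sum.cong refl) (auto simp: sum_distrib_left if_distrib intro!: sum.cong)
  also have "(\<Sum>v\<in>A. \<Sum>Q\<in>UNIV. (if P Q \<and> v \<in> Q then a v else 0)) = (\<Sum>Q\<in>UNIV. \<Sum>v\<in>A. (if P Q \<and> v \<in> Q then a v else 0))"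
    by (rule sum.swap)
  also have "\<dots> = (\<Sum>Q\<in>UNIV. if P Q then sum a (A \<inter> Q) else 0)"
  proof (intro sum.cong refl)
    fix Q
    have "(\<Sum>v\<in>A. (if P Q \<and> v \<in> Q then a v else 0)) = (if P Q then (\<Sum>v\<in>A. if v \<in> Q then a v else 0) else 0)"
      by auto
    also have "(\<Sum>v\<in>A. if v \<in> Q then a v else 0) = sum a (A \<inter> Q)"
      by (simp add: sum.inter_restrict[symmetric] indicator_def if_distrib cong: if_cong)
    finally show "(\<Sum>v\<in>A. (if P Q \<and> v \<in> Q then a v else 0)) = (if P Q then sum a (A \<inter> Q) else 0)" .
  qed
  finally show ?thesis .
qed

lemma zf_den_pos: fixes P :: "'v::finite set \<Rightarrow> bool" shows "\<exists>Q. P Q \<Longrightarrow> 0 < (\<Sum>Q\<in>UNIV. if P Q then 1 else (0::real))"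
proof -
  assume "\<exists>Q. P Q"
  then obtain Q0 where "P Q0" by blast
  have "(\<Sum>Q\<in>{Q0}. if P Q then 1 else (0::real)) \<le> (\<Sum>Q\<in>UNIV. if P Q then 1 else (0::real))"
    by (intro sum_mono2) auto
  then show ?thesis using \<open>P Q0\<close> by simp
qed

lemma zf_lower:
  assumes ex: "\<exists>Q. P Q" and K: "\<And>Q. P Q \<Longrightarrow> K \<le> sum a (A \<inter> Q)"
  shows "K \<le> (\<Sum>v\<in>A. a v * zf P v)"
proof -
  define n where "n = (\<Sum>Q\<in>UNIV. if P Q then 1 else (0::real))"
  have n: "0 < n" using zf_den_pos[OF ex] n_def by simp
  have "K * n = (\<Sum>Q\<in>UNIV. if P Q then K else 0)"
    unfolding n_def sum_distrib_left by (auto intro!: sum.cong)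
  also have "\<dots> \<le> (\<Sum>Q\<in>UNIV. if P Q then sum a (A \<inter> Q) else 0)"
    by (intro sum_mono) (auto simp: K)
  finally show ?thesis unfolding zf_sum n_def[symmetric] using n by (simp add: pos_le_divide_eq)
qed

lemma zf_upper:
  assumes ex: "\<exists>Q. P Q" and K: "\<And>Q. P Q \<Longrightarrow> sum a (A \<inter> Q) \<le> K"
  shows "(\<Sum>v\<in>A. a v * zf P v) \<le> K"
proof -
  define n where "n = (\<Sum>Q\<in>UNIV. if P Q then 1 else (0::real))"
  have n: "0 < n" using zf_den_pos[OF ex] n_def by simp
  have "(\<Sum>Q\<in>UNIV. if P Q then sum a (A \<inter> Q) else 0) \<le> (\<Sum>Q\<in>UNIV. if P Q then K else 0)"
    by (intro sum_mono) (auto simp: K)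
  also have "\<dots> = K * n"
    unfolding n_def sum_distrib_left by (auto intro!: sum.cong)
  finally show ?thesis unfolding zf_sum n_def[symmetric] using n by (simp add: pos_divide_le_eq)
qed

lemma zf_nonneg: "0 \<le> zf P v"
  unfolding zf_def by (intro divide_nonneg_nonneg sum_nonneg) auto

lemma zf_single: "zf P v = (\<Sum>u\<in>{v}. 1 * zf P u)" by simp

lemma zf_one: assumes "\<exists>Q. P Q" "\<And>Q. P Q \<Longrightarrow> v \<in> Q" shows "1 \<le> zf P v"
  using zf_lower[OF assms(1), of 1 "\<lambda>_. 1" "{v}"] assms(2) by auto

lemma zf_edge: assumes "\<exists>Q. P Q" "\<And>Q. P Q \<Longrightarrow> u \<in> Q \<or> v \<in> Q" "u \<noteq> v"
  shows "1 \<le> zf P u + zf P v"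
proof -
  have "1 \<le> (\<Sum>x\<in>{u,v}. 1 * zf P x)"
    using assms by (intro zf_lower) (auto simp: card_gt_0_iff Int_insert_left)
  then show ?thesis using assms(3) by simp
qed


definition sgnh :: "real \<Rightarrow> real" where
  "sgnh t = (if 0 < t \<and> t < 1/2 then 1 else if 1/2 < t \<and> t < 1 then -1 else if 1 < t then 1 else 0)"

lemma sgnh_tight: "0 \<le> a \<Longrightarrow> 0 \<le> b \<Longrightarrow> a + b = 1 \<Longrightarrow> sgnh a + sgnh b = 0"
  unfolding sgnh_def by auto

lemma sgnh_zero: "0 \<le> t \<Longrightarrow> sgnh t = 0 \<Longrightarrow> t = 0 \<or> t = 1/2 \<or> t = 1"
  unfolding sgnh_def by (auto split: if_splits)

lemma half_integral:
  fixes x :: "'v::finite \<Rightarrow> real"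
  assumes B: "lp_basic_feasible E S x" and v: "v \<in> S"
  shows "x v = 0 \<or> x v = 1/2 \<or> x v = 1"
proof -
  have F: "lp_feasible E S x" and out: "\<forall>v. v \<notin> S \<longrightarrow> x v = 0"
    and ext: "\<And>y. (\<forall>v. v \<notin> S \<longrightarrow> y v = 0) \<and> lp_feasible E S (\<lambda>v. x v + y v)
            \<and> lp_feasible E S (\<lambda>v. x v - y v) \<Longrightarrow> y = (\<lambda>_. 0)"
    using B unfolding lp_basic_feasible_def by blast+
  have nn: "\<And>v. v \<in> S \<Longrightarrow> 0 \<le> x v" using F unfolding lp_feasible_def by blast
  have ed: "\<And>u v. {u, v} \<in> E \<Longrightarrow> u \<in> S \<Longrightarrow> v \<in> S \<Longrightarrow> 1 \<le> x u + x v"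
    using F unfolding lp_feasible_def by blast
  define A where "A = {1::real} \<union> {x v |v. v \<in> S \<and> 0 < x v} \<union> {(x u + x v - 1) / 2 |u v. u \<in> S \<and> v \<in> S \<and> 1 < x u + x v}"
  have finA: "finite A"
  proof -
    have s1: "{x v |v. v \<in> S \<and> 0 < x v} \<subseteq> range x" by auto
    have s2: "{(x u + x v - 1) / 2 |u v. u \<in> S \<and> v \<in> S \<and> 1 < x u + x v} \<subseteq> (\<lambda>p. (x (fst p) + x (snd p) - 1) / 2) ` UNIV"
    proof (rule subsetI)
      fix a assume "a \<in> {(x u + x v - 1) / 2 |u v. u \<in> S \<and> v \<in> S \<and> 1 < x u + x v}"
      then obtain u v where "a = (x u + x v - 1) / 2" by blast
      then show "a \<in> (\<lambda>p. (x (fst p) + x (snd p) - 1) / 2) ` UNIV" by (intro image_eqI[where x="(u,v)"]) auto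
    qed
    have f1: "finite {x v |v. v \<in> S \<and> 0 < x v}" by (rule finite_subset[OF s1]) simp
    have f2: "finite {(x u + x v - 1) / 2 |u v. u \<in> S \<and> v \<in> S \<and> 1 < x u + x v}"
      by (rule finite_subset[OF s2]) simp
    show ?thesis unfolding A_def using f1 f2 by simp
  qed
  define \<epsilon> where "\<epsilon> = Min A"
  have Apos: "\<And>a. a \<in> A \<Longrightarrow> 0 < a" unfolding A_def by auto
  have ne: "A \<noteq> {}" unfolding A_def by blast
  have eps_pos: "0 < \<epsilon>" unfolding \<epsilon>_def using Apos by (subst Min_gr_iff[OF finA ne]) blast
  have eps_le: "\<And>a. a \<in> A \<Longrightarrow> \<epsilon> \<le> a" unfolding \<epsilon>_def using finA by (simp add: Min_le)
  have e1: "\<And>v. v \<in> S \<Longrightarrow> 0 < x v \<Longrightarrow> \<epsilon> \<le> x v" using eps_le unfolding A_def by blast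
  have e2: "\<And>u v. u \<in> S \<Longrightarrow> v \<in> S \<Longrightarrow> 1 < x u + x v \<Longrightarrow> \<epsilon> \<le> (x u + x v - 1) / 2"
    using eps_le unfolding A_def by blast
  define y where "y = (\<lambda>v. if v \<in> S then \<epsilon> * sgnh (x v) else 0)"
  have ybd: "\<And>v. v \<in> S \<Longrightarrow> \<bar>y v\<bar> \<le> x v"
  proof -
    fix v assume vS: "v \<in> S"
    show "\<bar>y v\<bar> \<le> x v"
    proof (cases "sgnh (x v) = 0")
      case True then show ?thesis using vS nn[OF vS] by (simp add: y_def)
    next
      case False
      then have "0 < x v" using nn[OF vS] unfolding sgnh_def by (auto split: if_splits)
      moreover have "\<bar>sgnh (x v)\<bar> = 1" using False unfolding sgnh_def by (auto split: if_splits)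
      ultimately show ?thesis using vS e1[OF vS] eps_pos by (simp add: y_def abs_mult)
    qed
  qed
  have yed: "\<And>u v. {u, v} \<in> E \<Longrightarrow> u \<in> S \<Longrightarrow> v \<in> S \<Longrightarrow> \<bar>y u + y v\<bar> \<le> x u + x v - 1"
  proof -
    fix u v assume uv: "{u, v} \<in> E" "u \<in> S" "v \<in> S"
    show "\<bar>y u + y v\<bar> \<le> x u + x v - 1"
    proof (cases "x u + x v = 1")
      case True
      then have "sgnh (x u) + sgnh (x v) = 0" using nn uv by (intro sgnh_tight) auto
      then have "y u + y v = 0" using uv unfolding y_def by (simp add: distrib_left[symmetric])
      then show ?thesis using True by simp
    next
      case False
      then have gt: "1 < x u + x v" using ed[OF uv] by simp
      have "\<bar>sgnh t\<bar> \<le> 1" for t unfolding sgnh_def by auto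
      then have "\<bar>y u\<bar> \<le> \<epsilon>" "\<bar>y v\<bar> \<le> \<epsilon>" using eps_pos unfolding y_def by (auto simp: abs_mult)
      moreover have "2 * \<epsilon> \<le> x u + x v - 1" using e2[OF uv(2,3) gt] by (simp add: field_simps)
      ultimately have "\<bar>y u\<bar> + \<bar>y v\<bar> \<le> x u + x v - 1" by linarith
      then show ?thesis using abs_triangle_ineq[of "y u" "y v"] by linarith
    qed
  qed
  have "lp_feasible E S (\<lambda>v. x v + y v)" "lp_feasible E S (\<lambda>v. x v - y v)"
    unfolding lp_feasible_def
  proof (safe)
    fix v assume "v \<in> S" then show "0 \<le> x v + y v" "0 \<le> x v - y v" using ybd[of v] by linarith+
  next
    fix u v assume "{u, v} \<in> E" "u \<in> S" "v \<in> S"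
    then show "1 \<le> x u + y u + (x v + y v)" "1 \<le> x u - y u + (x v - y v)" using yed[of u v] by linarith+
  qed
  moreover have "\<forall>v. v \<notin> S \<longrightarrow> y v = 0" unfolding y_def by simp
  ultimately have "y = (\<lambda>_. 0)" using ext by blast
  then have "y v = 0" by simp
  then have "sgnh (x v) = 0" using v eps_pos unfolding y_def by simp
  then show ?thesis using sgnh_zero nn[OF v] by blast
qed


lemma opt_step:
  assumes opt: "lp_optimal_bfs E c S x" and F: "lp_feasible E S (\<lambda>v. x v + k v / 2)"
  shows "0 \<le> (\<Sum>v\<in>S. c v * k v)"
proof -
  have "(\<Sum>v\<in>S. c v * x v) \<le> (\<Sum>v\<in>S. c v * (x v + k v / 2))"
    using opt F unfolding lp_optimal_bfs_def by blast
  also have "\<dots> = (\<Sum>v\<in>S. c v * x v) + (\<Sum>v\<in>S. c v * k v) / 2"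
    by (simp add: distrib_left sum.distrib sum_divide_distrib)
  finally show ?thesis by (simp add: field_simps)
qed

lemma sum_split3:
  assumes "S = A \<union> B \<union> C" "A \<inter> B = {}" "A \<inter> C = {}" "B \<inter> C = {}" "finite S"
  shows "sum f S = sum f A + sum f B + sum f C"
proof -
  have fA: "finite A" "finite B" "finite C" using assms by auto
  have "sum f S = sum f (A \<union> B) + sum f C" using assms fA by (simp add: sum.union_disjoint Int_Un_distrib2)
  also have "sum f (A \<union> B) = sum f A + sum f B" using assms fA by (simp add: sum.union_disjoint)
  finally show ?thesis .
qed

lemma main_det:
  fixes c p z x :: "'v::finite \<Rightarrow> real"
  assumes d0: "0 < d" and d1: "d \<le> 1" and a1: "1 \<le> \<alpha>"
    and cnn: "\<And>v. 0 \<le> c v" and znn: "\<And>v. 0 \<le> z v" and pz: "\<And>v. p v \<le> z v"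
    and zed: "\<And>u v. {u, v} \<in> E \<Longrightarrow> 1 \<le> z u + z v"
    and S_def: "S = - {v. d \<le> p v}"
    and opt: "lp_optimal_bfs E c S x"
    and Vh_def: "Vh = {v\<in>S. x v = 1/2}" and V1_def: "V1 = {v\<in>S. x v = 1}"
    and VCsub: "VC \<subseteq> Vh" and VCb: "sum c VC \<le> \<alpha> * (\<Sum>v\<in>Vh. c v * z v)"
    and Q_def: "Q = {v. d \<le> p v} \<union> V1 \<union> VC"
  shows "sum c Q + (\<Sum>v\<in>-Q. c v * p v) \<le> max (1/d) (\<alpha> + (2 - \<alpha>) * d) * (\<Sum>v\<in>UNIV. c v * z v)"
proof -
  define M where "M = {v. d \<le> p v}"
  define V0 where "V0 = {v\<in>S. x v = 0}"
  have bfs: "lp_basic_feasible E S x" using opt unfolding lp_optimal_bfs_def by blast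
  have hi: "\<And>v. v \<in> S \<Longrightarrow> x v = 0 \<or> x v = 1/2 \<or> x v = 1" using half_integral[OF bfs] by blast
  have F: "lp_feasible E S x" using bfs unfolding lp_basic_feasible_def by blast
  have ed: "\<And>u v. {u, v} \<in> E \<Longrightarrow> u \<in> S \<Longrightarrow> v \<in> S \<Longrightarrow> 1 \<le> x u + x v"
    using F unfolding lp_feasible_def by blast
  have Sparts: "S = V1 \<union> Vh \<union> V0" using hi unfolding V1_def Vh_def V0_def by auto
  have disj: "V1 \<inter> Vh = {}" "V1 \<inter> V0 = {}" "Vh \<inter> V0 = {}" unfolding V1_def Vh_def V0_def by auto
  have subs: "V1 \<subseteq> S" "Vh \<subseteq> S" "V0 \<subseteq> S" unfolding V1_def Vh_def V0_def by auto
  have pS: "\<And>v. v \<in> S \<Longrightarrow> p v < d" unfolding S_def by auto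
  have splitS: "\<And>f. sum f S = sum f V1 + sum f Vh + sum f V0"
    by (rule sum_split3[OF Sparts disj]) simp
  define k1 where "k1 = (\<lambda>v. if v \<in> V1 then (1+d) * z v - 1 else if v \<in> Vh then 0 else (1+d) * z v - p v)"
  have k1V0: "\<And>v. v \<in> V0 \<Longrightarrow> 0 \<le> k1 v"
  proof -
    fix v assume v: "v \<in> V0"
    have "0 \<le> d * z v" using znn[of v] d0 by simp
    then have "p v \<le> (1+d) * z v" using pz[of v] by (simp add: distrib_right)
    then show "0 \<le> k1 v" using v disj unfolding k1_def by auto
  qed
  have k1V1: "\<And>v. v \<in> V1 \<Longrightarrow> -1 \<le> k1 v"
    using znn d0 unfolding k1_def by (simp add: zero_le_mult_iff)
  have "lp_feasible E S (\<lambda>v. x v + k1 v / 2)"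
    unfolding lp_feasible_def
  proof safe
    fix v assume vS: "v \<in> S"
    show "0 \<le> x v + k1 v / 2"
    proof -
      have "v \<in> V1 \<or> v \<in> Vh \<or> v \<in> V0" using vS Sparts by auto
      then show ?thesis
      proof (elim disjE)
        assume "v \<in> V1" then show ?thesis using k1V1[of v] unfolding V1_def by simp
      next
        assume "v \<in> Vh" then show ?thesis using disj unfolding k1_def Vh_def by auto
      next
        assume "v \<in> V0" then show ?thesis using k1V0[of v] unfolding V0_def by simp
      qed
    qed
  next
    fix u v assume e: "{u, v} \<in> E" and uS: "u \<in> S" and vS: "v \<in> S"
    have xe: "1 \<le> x u + x v" using ed[OF e uS vS] .
    have zuv: "1 \<le> z u + z v" using zed[OF e] .
    have dz: "1 + d \<le> (1+d) * (z u + z v)" using zuv d0 by (simp add: mult_left_mono[of 1 _ "1+d", simplified])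
    have cu: "u \<in> V1 \<or> u \<in> Vh \<or> u \<in> V0" and cv: "v \<in> V1 \<or> v \<in> Vh \<or> v \<in> V0" using uS vS Sparts by auto
    have k1V1': "\<And>w. w \<in> V1 \<Longrightarrow> k1 w = (1+d) * z w - 1" unfolding k1_def by simp
    have k1Vh': "\<And>w. w \<in> Vh \<Longrightarrow> k1 w = 0" using disj unfolding k1_def by auto
    have k1V0': "\<And>w. w \<in> V0 \<Longrightarrow> k1 w = (1+d) * z w - p w" using disj unfolding k1_def by auto
    have x1: "\<And>w. w \<in> V1 \<Longrightarrow> x w = 1" and xh: "\<And>w. w \<in> Vh \<Longrightarrow> 2 * x w = 1"
      and x0: "\<And>w. w \<in> V0 \<Longrightarrow> x w = 0" unfolding V1_def Vh_def V0_def by auto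
    have goal: "2 \<le> 2 * x u + 2 * x v + k1 u + k1 v"
    proof -
      have zu: "0 \<le> (1+d) * z u" "0 \<le> (1+d) * z v" using znn d0 by auto
      show ?thesis
        using cu cv
      proof (elim disjE)
        assume "u \<in> V1" "v \<in> V1" then show ?thesis using k1V1'[of u] k1V1'[of v] x1[of u] x1[of v] zu by linarith
      next
        assume "u \<in> V1" "v \<in> Vh" then show ?thesis using k1V1'[of u] k1Vh'[of v] x1[of u] xh[of v] zu by linarith
      next
        assume a: "u \<in> V1" "v \<in> V0" then show ?thesis using k1V1'[of u] k1V0'[of v] x1[of u] x0[of v] dz pS[OF vS]
          by (simp add: distrib_left)
      next
        assume "u \<in> Vh" "v \<in> V1" then show ?thesis using k1V1'[of v] k1Vh'[of u] x1[of v] xh[of u] zu by linarith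
      next
        assume "u \<in> Vh" "v \<in> Vh" then show ?thesis using k1Vh'[of u] k1Vh'[of v] xh[of u] xh[of v] by linarith
      next
        assume "u \<in> Vh" "v \<in> V0" then show ?thesis using xe xh[of u] x0[of v] by linarith
      next
        assume a: "u \<in> V0" "v \<in> V1" then show ?thesis using k1V1'[of v] k1V0'[of u] x1[of v] x0[of u] dz pS[OF uS]
          by (simp add: distrib_left)
      next
        assume "u \<in> V0" "v \<in> Vh" then show ?thesis using xe xh[of v] x0[of u] by linarith
      next
        assume "u \<in> V0" "v \<in> V0" then show ?thesis using xe x0[of u] x0[of v] by linarith
      qed
    qed
    then show "1 \<le> x u + k1 u / 2 + (x v + k1 v / 2)" by (simp add: field_simps)
  qed
  from opt_step[OF opt this] have A0: "0 \<le> (\<Sum>v\<in>S. c v * k1 v)" .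
  have A1: "(\<Sum>v\<in>V1. c v * k1 v) = (1+d) * (\<Sum>v\<in>V1. c v * z v) - sum c V1"
    unfolding k1_def by (simp add: sum_subtractf sum_distrib_left right_diff_distrib algebra_simps)
  have A2: "(\<Sum>v\<in>Vh. c v * k1 v) = 0" using disj unfolding k1_def by (auto intro!: sum.neutral)
  have A3: "(\<Sum>v\<in>V0. c v * k1 v) = (1+d) * (\<Sum>v\<in>V0. c v * z v) - (\<Sum>v\<in>V0. c v * p v)"
  proof -
    have "(\<Sum>v\<in>V0. c v * k1 v) = (\<Sum>v\<in>V0. (1+d) * (c v * z v) - c v * p v)"
      using disj by (intro sum.cong) (auto simp: k1_def algebra_simps)
    then show ?thesis by (simp add: sum_subtractf sum_distrib_left)
  qed
  have A: "sum c V1 + (\<Sum>v\<in>V0. c v * p v) \<le> (1+d) * (\<Sum>v\<in>V1. c v * z v) + (1+d) * (\<Sum>v\<in>V0. c v * z v)"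
    using A0 A1 A2 A3 splitS[of "\<lambda>v. c v * k1 v"] by linarith
  define k2 where "k2 = (\<lambda>v. if v \<in> Vh then 2 * z v - 1 else 0)"
  have "lp_feasible E S (\<lambda>v. x v + k2 v / 2)"
    unfolding lp_feasible_def
  proof safe
    fix v assume vS: "v \<in> S"
    show "0 \<le> x v + k2 v / 2"
    proof (cases "v \<in> Vh")
      case True then have "2 * x v = 1" "k2 v = 2 * z v - 1" unfolding k2_def Vh_def by auto
      then show ?thesis using znn[of v] by (simp add: field_simps)
    next
      case False then show ?thesis using F vS unfolding k2_def lp_feasible_def by simp
    qed
  next
    fix u v assume e: "{u, v} \<in> E" and uS: "u \<in> S" and vS: "v \<in> S"
    have xe: "1 \<le> x u + x v" using ed[OF e uS vS] .
    have zuv: "1 \<le> z u + z v" using zed[OF e] .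
    have cu: "u \<in> V1 \<or> u \<in> Vh \<or> u \<in> V0" and cv: "v \<in> V1 \<or> v \<in> Vh \<or> v \<in> V0" using uS vS Sparts by auto
    have x1: "\<And>w. w \<in> V1 \<Longrightarrow> x w = 1" and xh: "\<And>w. w \<in> Vh \<Longrightarrow> 2 * x w = 1"
      and x0: "\<And>w. w \<in> V0 \<Longrightarrow> x w = 0" unfolding V1_def Vh_def V0_def by auto
    have k2h: "\<And>w. w \<in> Vh \<Longrightarrow> k2 w = 2 * z w - 1" and k2n: "\<And>w. w \<notin> Vh \<Longrightarrow> k2 w = 0"
      unfolding k2_def by auto
    have k21: "\<And>w. w \<in> V1 \<Longrightarrow> k2 w = 0" and k20: "\<And>w. w \<in> V0 \<Longrightarrow> k2 w = 0"
      using disj unfolding k2_def by auto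
    have goal: "2 \<le> 2 * x u + 2 * x v + k2 u + k2 v"
      using cu cv
    proof (elim disjE)
      assume "u \<in> V1" "v \<in> V1" then show ?thesis using x1[of u] x1[of v] k21[of u] k21[of v] by linarith
    next
      assume "u \<in> V1" "v \<in> Vh" then show ?thesis using x1[of u] xh[of v] k21[of u] k2h[of v] znn[of v] by linarith
    next
      assume "u \<in> V1" "v \<in> V0" then show ?thesis using xe x1[of u] x0[of v] k21[of u] k20[of v] by linarith
    next
      assume "u \<in> Vh" "v \<in> V1" then show ?thesis using x1[of v] xh[of u] k21[of v] k2h[of u] znn[of u] by linarith
    next
      assume "u \<in> Vh" "v \<in> Vh" then show ?thesis using xh[of u] xh[of v] k2h[of u] k2h[of v] zuv by linarith
    next
      assume "u \<in> Vh" "v \<in> V0" then show ?thesis using xe xh[of u] x0[of v] by linarith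
    next
      assume "u \<in> V0" "v \<in> V1" then show ?thesis using xe x1[of v] x0[of u] k20[of u] k21[of v] by linarith
    next
      assume "u \<in> V0" "v \<in> Vh" then show ?thesis using xe xh[of v] x0[of u] by linarith
    next
      assume "u \<in> V0" "v \<in> V0" then show ?thesis using xe x0[of u] x0[of v] by linarith
    qed
    then show "1 \<le> x u + k2 u / 2 + (x v + k2 v / 2)" by (simp add: field_simps)
  qed
  from opt_step[OF opt this] have B0: "0 \<le> (\<Sum>v\<in>S. c v * k2 v)" .
  have B1: "(\<Sum>v\<in>V1. c v * k2 v) = 0" "(\<Sum>v\<in>V0. c v * k2 v) = 0"
    using disj unfolding k2_def by (auto intro!: sum.neutral)
  have B2: "(\<Sum>v\<in>Vh. c v * k2 v) = 2 * (\<Sum>v\<in>Vh. c v * z v) - sum c Vh"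
  proof -
    have "(\<Sum>v\<in>Vh. c v * k2 v) = (\<Sum>v\<in>Vh. 2 * (c v * z v) - c v)"
      by (intro sum.cong) (auto simp: k2_def algebra_simps)
    then show ?thesis by (simp add: sum_subtractf sum_distrib_left)
  qed
  have B: "sum c Vh \<le> 2 * (\<Sum>v\<in>Vh. c v * z v)"
    using B0 B1 B2 splitS[of "\<lambda>v. c v * k2 v"] by linarith
  define ZM where "ZM = (\<Sum>v\<in>M. c v * z v)"
  define Z1 where "Z1 = (\<Sum>v\<in>V1. c v * z v)"
  define Zh where "Zh = (\<Sum>v\<in>Vh. c v * z v)"
  define Z0 where "Z0 = (\<Sum>v\<in>V0. c v * z v)"
  have Znn: "0 \<le> ZM" "0 \<le> Z1" "0 \<le> Zh" "0 \<le> Z0" unfolding ZM_def Z1_def Zh_def Z0_def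
    using cnn znn by (auto intro!: sum_nonneg)
  have SM: "S = - M" unfolding S_def M_def by simp
  have Ztot: "(\<Sum>v\<in>UNIV. c v * z v) = ZM + Z1 + Zh + Z0"
  proof -
    have "UNIV = M \<union> S" unfolding SM by auto
    then have "(\<Sum>v\<in>UNIV. c v * z v) = ZM + (\<Sum>v\<in>S. c v * z v)"
      unfolding ZM_def SM by (simp add: sum.union_disjoint[symmetric] Un_commute)
    then show ?thesis using splitS[of "\<lambda>v. c v * z v"] unfolding Z1_def Zh_def Z0_def by simp
  qed
  have cM: "sum c M \<le> ZM / d"
  proof -
    have "sum c M * d \<le> ZM" unfolding ZM_def sum_distrib_right
    proof (rule sum_mono)
      fix v assume "v \<in> M"
      then have "d \<le> z v" using pz[of v] unfolding M_def by simp
      then show "c v * d \<le> c v * z v" using cnn[of v] by (simp add: mult_left_mono)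
    qed
    then show ?thesis using d0 by (simp add: pos_le_divide_eq)
  qed
  have Qparts: "sum c Q = sum c M + sum c V1 + sum c VC"
  proof -
    have "M \<inter> V1 = {}" "M \<inter> VC = {}" "V1 \<inter> VC = {}" using subs VCsub disj unfolding SM by auto
    then show ?thesis unfolding Q_def M_def[symmetric]
      by (simp add: sum.union_disjoint Int_Un_distrib2)
  qed
  have nQ: "- Q = V0 \<union> (Vh - VC)"
  proof -
    have "UNIV = M \<union> V1 \<union> Vh \<union> V0" using Sparts SM by auto
    then show ?thesis unfolding Q_def M_def[symmetric] using subs VCsub disj SM by blast
  qed
  have nQs: "(\<Sum>v\<in>-Q. c v * p v) = (\<Sum>v\<in>V0. c v * p v) + (\<Sum>v\<in>Vh - VC. c v * p v)"
    unfolding nQ using disj by (subst sum.union_disjoint) auto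
  have hVC: "(\<Sum>v\<in>Vh - VC. c v * p v) \<le> d * (sum c Vh - sum c VC)"
  proof -
    have "(\<Sum>v\<in>Vh - VC. c v * p v) \<le> (\<Sum>v\<in>Vh - VC. d * c v)"
    proof (rule sum_mono)
      fix v assume "v \<in> Vh - VC"
      then have "p v < d" using pS subs by auto
      then have "c v * p v \<le> c v * d" using cnn[of v] by (intro mult_left_mono) auto
      then show "c v * p v \<le> d * c v" by (simp add: mult.commute)
    qed
    also have "\<dots> = d * (sum c Vh - sum c VC)"
      using VCsub by (simp add: sum_distrib_left[symmetric] sum_diff)
    finally show ?thesis .
  qed
  have VCh: "sum c VC \<le> sum c Vh" using VCsub cnn by (intro sum_mono2) auto
  define \<rho> where "\<rho> = \<alpha> + (2 - \<alpha>) * d"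
  have rho_eq: "\<rho> = (1 - d) * \<alpha> + 2 * d" unfolding \<rho>_def by (simp add: algebra_simps)
  have rho1: "1 + d \<le> \<rho>"
  proof -
    have "0 \<le> (\<alpha> - 1) * (1 - d)" using a1 d1 by simp
    then show ?thesis unfolding \<rho>_def by (simp add: algebra_simps)
  qed
  have mid: "(1 - d) * sum c VC + d * sum c Vh \<le> \<rho> * Zh"
  proof -
    have "(1 - d) * sum c VC \<le> (1 - d) * (\<alpha> * Zh)" using VCb d1 unfolding Zh_def by (simp add: mult_left_mono)
    moreover have "d * sum c Vh \<le> d * (2 * Zh)" using B d0 unfolding Zh_def by (simp add: mult_left_mono)
    ultimately show ?thesis unfolding rho_eq by (simp add: algebra_simps)
  qed
  define R where "R = max (1/d) \<rho>"
  have R1: "ZM / d \<le> R * ZM" unfolding R_def using Znn(1)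
    by (simp add: divide_inverse mult.commute mult_left_mono)
  have R2: "(1+d) * (Z1 + Z0) \<le> R * (Z1 + Z0)" unfolding R_def using Znn rho1
    by (intro mult_right_mono) auto
  have R3: "\<rho> * Zh \<le> R * Zh" unfolding R_def using Znn by (intro mult_right_mono) auto
  have "sum c Q + (\<Sum>v\<in>-Q. c v * p v)
      \<le> ZM / d + (sum c V1 + (\<Sum>v\<in>V0. c v * p v)) + ((1 - d) * sum c VC + d * sum c Vh)"
    using Qparts nQs hVC cM by (simp add: algebra_simps)
  also have "\<dots> \<le> ZM / d + (1+d) * (Z1 + Z0) + \<rho> * Zh"
    using A mid unfolding Z1_def Z0_def by (simp add: algebra_simps)
  also have "\<dots> \<le> R * ZM + R * (Z1 + Z0) + R * Zh" using R1 R2 R3 by linarith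
  also have "\<dots> = R * (\<Sum>v\<in>UNIV. c v * z v)" unfolding Ztot by (simp add: algebra_simps)
  finally show ?thesis unfolding R_def \<rho>_def .
qed


abbreviation BB :: "('v::finite \<Rightarrow> real) measure" where
  "BB \<equiv> PiM UNIV (\<lambda>_. borel)"

definition optset :: "'v set set \<Rightarrow> ('v \<Rightarrow> real) \<Rightarrow> ('v \<Rightarrow> real) \<Rightarrow> ('v \<Rightarrow> real) \<Rightarrow> ('v \<Rightarrow> real) \<Rightarrow> 'v set \<Rightarrow> bool" where
  "optset E l r c w Q \<longleftrightarrow> feasible_query E l r w Q \<and> (\<forall>Q'\<in>UNIV. feasible_query E l r w Q' \<longrightarrow> sum c Q \<le> sum c Q')"

lemma space_BB: "space (BB :: ('v::finite \<Rightarrow> real) measure) = UNIV"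
  by (simp add: space_PiM)

context
  fixes E :: "('v::finite) set set" and l r c :: "'v \<Rightarrow> real" and D :: "'v \<Rightarrow> real measure"
  assumes G: "go_instance E l r c D"
begin

lemma pred_feas: "Measurable.pred BB (\<lambda>w. feasible_query E l r w Q)"
  unfolding pred_def by (rule feasible_pred[OF G])

lemma pred_mand: "Measurable.pred BB (\<lambda>w. mandatory E l r w v)"
proof -
  have "Measurable.pred BB (\<lambda>w. \<forall>Q\<in>UNIV. feasible_query E l r w Q \<longrightarrow> v \<in> Q)"
    by (rule pred_intros_finite(3), simp, rule pred_intros_logic(4), rule pred_feas) (simp add: measurable_const)
  then show ?thesis unfolding mandatory_def by simp
qed

lemma pred_opt: "Measurable.pred BB (\<lambda>w. optset E l r c w Q)"
proof -
  have "Measurable.pred BB (\<lambda>w. feasible_query E l r w Q \<and> (\<forall>Q'\<in>UNIV. feasible_query E l r w Q' \<longrightarrow> sum c Q \<le> sum c Q'))"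
    by (rule pred_intros_logic(3), rule pred_feas, rule pred_intros_finite(3), simp,
        rule pred_intros_logic(4), rule pred_feas) (simp add: measurable_const)
  then show ?thesis unfolding optset_def by simp
qed

lemma ex_opt: "\<exists>Q. optset E l r c w Q"
proof -
  let ?F = "{Q. feasible_query E l r w Q}"
  have ne: "?F \<noteq> {}" using UNIV_feasible[OF G] by blast
  have fin: "finite (sum c ` ?F)" by simp
  have "Min (sum c ` ?F) \<in> sum c ` ?F" using Min_in[OF fin] ne by blast
  then obtain Q where Q: "Q \<in> ?F" "sum c Q = Min (sum c ` ?F)" by (metis (no_types, lifting) imageE)
  have "\<forall>Q'\<in>UNIV. feasible_query E l r w Q' \<longrightarrow> sum c Q \<le> sum c Q'"
    using Q(2) fin by (auto intro: Min_le)
  then show ?thesis using Q(1) unfolding optset_def by blast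
qed

lemma opt_cost_eq: "optset E l r c w Q \<Longrightarrow> opt_cost E l r c w = sum c Q"
proof -
  assume O: "optset E l r c w Q"
  let ?F = "{Q. feasible_query E l r w Q}"
  have fin: "finite (sum c ` ?F)" by simp
  have "Min (sum c ` ?F) = sum c Q"
    using O unfolding optset_def by (intro Min_eqI) auto
  then show ?thesis unfolding opt_cost_def by simp
qed

definition zw :: "'v \<Rightarrow> ('v \<Rightarrow> real) \<Rightarrow> real" where
  "zw v w = zf (optset E l r c w) v"

lemma zw_meas: "zw v \<in> borel_measurable BB"
proof -
  have h: "\<And>P :: ('v \<Rightarrow> real) \<Rightarrow> bool. Measurable.pred BB P \<Longrightarrow> (\<lambda>w. if P w then 1 else (0::real)) \<in> borel_measurable BB"
    by (rule measurable_If) (auto simp: pred_def)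
  have n: "(\<lambda>w. \<Sum>Q\<in>UNIV. if optset E l r c w Q \<and> v \<in> Q then 1 else (0::real)) \<in> borel_measurable BB"
    by (intro borel_measurable_sum h pred_intros_logic(3) pred_opt) (simp add: measurable_const)
  have d: "(\<lambda>w. \<Sum>Q\<in>UNIV. if optset E l r c w Q then 1 else (0::real)) \<in> borel_measurable BB"
    by (intro borel_measurable_sum h pred_opt)
  show ?thesis unfolding zw_def zf_def by (intro borel_measurable_divide n d)
qed

lemma sets_NB: "sets (PiM UNIV D) = sets BB" by (rule sets_N[OF G])
lemma space_N: "space (PiM UNIV D) = UNIV" using sets_eq_imp_space_eq[OF sets_NB] space_BB by simp

lemma meas_N:
  assumes "f \<in> borel_measurable BB" shows "f \<in> borel_measurable (PiM UNIV D)"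
proof -
  have e: "borel_measurable (PiM UNIV D) = borel_measurable BB" by (rule measurable_cong_sets[OF sets_NB refl])
  show ?thesis unfolding e by (rule assms)
qed

lemma ps: "prob_space (PiM UNIV D)"
  using G unfolding go_instance_def by (intro prob_space_PiM) auto

lemma zw_bounds: "0 \<le> zw v w" "zw v w \<le> 1"
proof -
  show "0 \<le> zw v w" unfolding zw_def by (rule zf_nonneg)
  have "(\<Sum>u\<in>{v}. 1 * zf (optset E l r c w) u) \<le> 1"
    by (rule zf_upper[OF ex_opt]) (auto simp: card_le_Suc0_iff_eq sum_le_card_Max)
  then show "zw v w \<le> 1" unfolding zw_def by simp
qed


lemma zw_int: "integrable (PiM UNIV D) (zw v)"
proof -
  interpret N: prob_space "PiM UNIV D" by (rule ps)
  show ?thesis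
    by (rule N.integrable_const_bound[where B=1]) (auto simp: zw_bounds meas_N[OF zw_meas])
qed

definition zint :: "'v \<Rightarrow> real" where
  "zint v = (\<integral>w. zw v w \<partial>PiM UNIV D)"

lemma int_lin: "(\<integral>w. (\<Sum>v\<in>A. a v * zw v w) \<partial>PiM UNIV D) = (\<Sum>v\<in>A. a v * zint v)"
proof -
  have ii: "\<And>v. integrable (PiM UNIV D) (\<lambda>w. a v * zw v w)" by (intro Bochner_Integration.integrable_mult_right zw_int)
  have "(\<integral>w. (\<Sum>v\<in>A. a v * zw v w) \<partial>PiM UNIV D) = (\<Sum>v\<in>A. (\<integral>w. a v * zw v w \<partial>PiM UNIV D))"
    by (rule Bochner_Integration.integral_sum) (rule ii)
  also have "\<dots> = (\<Sum>v\<in>A. a v * zint v)"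
    unfolding zint_def by (intro sum.cong refl Bochner_Integration.integral_mult_right zw_int)
  finally show ?thesis .
qed

lemma int_lin_integrable: "integrable (PiM UNIV D) (\<lambda>w. \<Sum>v\<in>A. a v * zw v w)"
  by (intro Bochner_Integration.integrable_sum Bochner_Integration.integrable_mult_right zw_int)

lemma int_const: "(\<integral>w. (K::real) \<partial>PiM UNIV D) = K"
proof -
  interpret N: prob_space "PiM UNIV D" by (rule ps)
  show ?thesis using N.prob_space by simp
qed

lemma const_integrable: "integrable (PiM UNIV D) (\<lambda>w. K::real)"
proof -
  interpret N: prob_space "PiM UNIV D" by (rule ps)
  show ?thesis by simp
qed

lemma zint_nonneg: "0 \<le> zint v"
  unfolding zint_def by (rule Bochner_Integration.integral_nonneg) (simp add: zw_bounds)

lemma int_lower: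
  assumes "\<And>w. K \<le> (\<Sum>v\<in>A. a v * zw v w)"
  shows "K \<le> (\<Sum>v\<in>A. a v * zint v)"
proof -
  have "(\<integral>w. K \<partial>PiM UNIV D) \<le> (\<integral>w. (\<Sum>v\<in>A. a v * zw v w) \<partial>PiM UNIV D)"
    by (rule Bochner_Integration.integral_mono[OF const_integrable int_lin_integrable]) (rule assms)
  then show ?thesis unfolding int_const int_lin .
qed

lemma exp_opt: "expected_opt E l r c D = (\<Sum>v\<in>UNIV. c v * zint v)"
proof -
  have pw: "\<And>w. opt_cost E l r c w = (\<Sum>v\<in>UNIV. c v * zw v w)"
  proof -
    fix w
    have a: "opt_cost E l r c w \<le> (\<Sum>v\<in>UNIV. c v * zw v w)"
      unfolding zw_def by (rule zf_lower[OF ex_opt]) (simp add: opt_cost_eq)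
    have b: "(\<Sum>v\<in>UNIV. c v * zw v w) \<le> opt_cost E l r c w"
      unfolding zw_def by (rule zf_upper[OF ex_opt]) (simp add: opt_cost_eq)
    show "opt_cost E l r c w = (\<Sum>v\<in>UNIV. c v * zw v w)" using a b by linarith
  qed
  show ?thesis unfolding expected_opt_def pw int_lin ..
qed

lemma opt_feasible: "optset E l r c w Q \<Longrightarrow> feasible_query E l r w Q"
  unfolding optset_def by blast

lemma zint_edge: assumes e: "{u, v} \<in> E" shows "1 \<le> zint u + zint v"
proof -
  have uv: "u \<noteq> v" using G e unfolding go_instance_def by force
  have "\<And>w. 1 \<le> (\<Sum>x\<in>{u,v}. 1 * zw x w)"
  proof -
    fix w
    have "1 \<le> zw u w + zw v w" unfolding zw_def
      by (rule zf_edge[OF ex_opt _ uv]) (rule feasible_cover[OF G opt_feasible e])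
    then show "1 \<le> (\<Sum>x\<in>{u,v}. 1 * zw x w)" using uv by simp
  qed
  from int_lower[OF this] show ?thesis using uv by simp
qed

lemma mand_sets: "{w. mandatory E l r w v} \<in> sets (PiM UNIV D)"
proof -
  have "{w \<in> space BB. mandatory E l r w v} \<in> sets BB" using pred_mand[of v] unfolding pred_def .
  then show ?thesis unfolding sets_NB space_BB by simp
qed

lemma zint_mand: "prob_mandatory E l r D v \<le> zint v"
proof -
  interpret N: prob_space "PiM UNIV D" by (rule ps)
  have "prob_mandatory E l r D v = (\<integral>w. indicator {w. mandatory E l r w v} w \<partial>PiM UNIV D)"
    unfolding prob_mandatory_def by (simp add: space_N)
  also have "\<dots> \<le> zint v" unfolding zint_def
  proof (rule Bochner_Integration.integral_mono)
    show "integrable (PiM UNIV D) (indicator {w. mandatory E l r w v} :: _ \<Rightarrow> real)"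
      using mand_sets N.emeasure_finite by (intro integrable_real_indicator) (auto simp: less_top[symmetric])
    show "integrable (PiM UNIV D) (zw v)" by (rule zw_int)
    fix w
    show "indicator {w. mandatory E l r w v} w \<le> zw v w"
    proof (cases "mandatory E l r w v")
      case True
      then have "1 \<le> zw v w" unfolding zw_def
        by (intro zf_one[OF ex_opt]) (auto simp: mandatory_def dest: opt_feasible)
      then show ?thesis using True by simp
    next
      case False then show ?thesis by (simp add: zw_bounds)
    qed
  qed
  finally show ?thesis .
qed

lemma zint_vc:
  assumes a0: "0 < \<alpha>" and VCa: "\<forall>C. vertex_cover E Vh C \<longrightarrow> sum c VC \<le> \<alpha> * sum c C"
  shows "sum c VC \<le> \<alpha> * (\<Sum>v\<in>Vh. c v * zint v)"
proof -
  have "\<And>w. sum c VC / \<alpha> \<le> (\<Sum>v\<in>Vh. c v * zw v w)"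
  proof -
    fix w
    show "sum c VC / \<alpha> \<le> (\<Sum>v\<in>Vh. c v * zw v w)" unfolding zw_def
    proof (rule zf_lower[OF ex_opt])
      fix Q assume O: "optset E l r c w Q"
      have "vertex_cover E Vh (Vh \<inter> Q)"
        unfolding vertex_cover_def using feasible_cover[OF G opt_feasible[OF O]] by blast
      then have "sum c VC \<le> \<alpha> * sum c (Vh \<inter> Q)" using VCa by blast
      then show "sum c VC / \<alpha> \<le> sum c (Vh \<inter> Q)" using a0 by (simp add: divide_le_eq mult.commute)
    qed
  qed
  from int_lower[OF this] have "sum c VC / \<alpha> \<le> (\<Sum>v\<in>Vh. c v * zint v)" .
  then show ?thesis using a0 by (simp add: divide_le_eq mult.commute)
qed

lemma exp_thr: "expected_threshold E l r c D Q = sum c Q + (\<Sum>v\<in>-Q. c v * prob_mandatory E l r D v)"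
proof -
  interpret N: prob_space "PiM UNIV D" by (rule ps)
  have pw: "\<And>w. threshold_cost E l r c Q w = sum c Q + (\<Sum>v\<in>-Q. c v * indicator {w. mandatory E l r w v} w)"
  proof -
    fix w
    have eq: "{v. v \<notin> Q \<and> mandatory E l r w v} = {v \<in> -Q. mandatory E l r w v}" by auto
    have "sum c {v \<in> -Q. mandatory E l r w v} = (\<Sum>v\<in>-Q. if mandatory E l r w v then c v else 0)"
      by (rule sum.inter_filter) simp
    then have "sum c {v. v \<notin> Q \<and> mandatory E l r w v} = (\<Sum>v\<in>-Q. if mandatory E l r w v then c v else 0)"
      unfolding eq .
    also have "\<dots> = (\<Sum>v\<in>-Q. c v * indicator {w. mandatory E l r w v} w)"
      by (intro sum.cong) (auto simp: indicator_def)
    finally show "threshold_cost E l r c Q w = sum c Q + (\<Sum>v\<in>-Q. c v * indicator {w. mandatory E l r w v} w)"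
      unfolding threshold_cost_def by simp
  qed
  have ii: "\<And>v. integrable (PiM UNIV D) (indicator {w. mandatory E l r w v} :: _ \<Rightarrow> real)"
    using mand_sets N.emeasure_finite by (intro integrable_real_indicator) (auto simp: less_top[symmetric])
  have "expected_threshold E l r c D Q =
      (\<integral>w. sum c Q \<partial>PiM UNIV D) + (\<integral>w. (\<Sum>v\<in>-Q. c v * indicator {w. mandatory E l r w v} w) \<partial>PiM UNIV D)"
    unfolding expected_threshold_def pw by (intro Bochner_Integration.integral_add const_integrable Bochner_Integration.integrable_sum Bochner_Integration.integrable_mult_right ii)
  also have "(\<integral>w. (\<Sum>v\<in>-Q. c v * indicator {w. mandatory E l r w v} w) \<partial>PiM UNIV D)
     = (\<Sum>v\<in>-Q. c v * prob_mandatory E l r D v)"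
    by (subst Bochner_Integration.integral_sum) (auto simp: ii prob_mandatory_def space_N)
  finally show ?thesis by (simp add: N.prob_space)
qed

end

theorem theorem3p1:
  fixes E :: "('v::finite) set set" and l r c :: "'v \<Rightarrow> real"
    and D :: "'v \<Rightarrow> real measure" and \<alpha> :: real
  assumes "go_instance E l r c D" and "1 \<le> \<alpha>" and "\<alpha> \<le> 2"
  shows "(\<forall>d x VC Q. 0 < d \<and> d \<le> 1 \<and> threshold_steps E l r c D \<alpha> d x VC Q \<longrightarrow>
            expected_threshold E l r c D Q
              \<le> max (1 / d) (\<alpha> + (2 - \<alpha>) * d) * expected_opt E l r c D)
       \<and> (\<forall>x VC Q.
            threshold_steps E l r c D \<alpha> (2 / (\<alpha> + sqrt (8 - \<alpha> * (4 - \<alpha>)))) x VC Q \<longrightarrow>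
            expected_threshold E l r c D Q
              \<le> (\<alpha> + sqrt (8 - \<alpha> * (4 - \<alpha>))) / 2 * expected_opt E l r c D)"
proof -
  note G = assms(1)
  have P1: "\<And>d x VC Q. 0 < d \<Longrightarrow> d \<le> 1 \<Longrightarrow> threshold_steps E l r c D \<alpha> d x VC Q \<Longrightarrow>
            expected_threshold E l r c D Q
              \<le> max (1 / d) (\<alpha> + (2 - \<alpha>) * d) * expected_opt E l r c D"
  proof -
    fix d x VC Q assume d0: "0 < d" and d1: "d \<le> 1" and T: "threshold_steps E l r c D \<alpha> d x VC Q"
    define S where "S = - {v. d \<le> prob_mandatory E l r D v}"
    define Vh where "Vh = {v\<in>S. x v = 1/2}"
    define V1 where "V1 = {v\<in>S. x v = 1}"
    have opt: "lp_optimal_bfs E c S x" and vc: "vertex_cover E Vh VC"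
      and VCa: "\<forall>C. vertex_cover E Vh C \<longrightarrow> sum c VC \<le> \<alpha> * sum c C"
      and Qd: "Q = {v. d \<le> prob_mandatory E l r D v} \<union> V1 \<union> VC"
      using T unfolding threshold_steps_def Let_def S_def Vh_def V1_def by blast+
    have VCsub: "VC \<subseteq> Vh" using vc unfolding vertex_cover_def by blast
    have cnn: "\<And>v. 0 \<le> c v" using G unfolding go_instance_def by blast
    have "sum c Q + (\<Sum>v\<in>-Q. c v * prob_mandatory E l r D v)
       \<le> max (1/d) (\<alpha> + (2 - \<alpha>) * d) * (\<Sum>v\<in>UNIV. c v * zint E l r c D v)"
    proof (rule main_det[OF d0 d1 assms(2) cnn zint_nonneg[OF G] zint_mand[OF G] zint_edge[OF G] S_def opt Vh_def V1_def VCsub _ Qd])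
      show "sum c VC \<le> \<alpha> * (\<Sum>v\<in>Vh. c v * zint E l r c D v)"
        using zint_vc[OF G _ VCa] assms(2) by simp
    qed
    then show "expected_threshold E l r c D Q
              \<le> max (1 / d) (\<alpha> + (2 - \<alpha>) * d) * expected_opt E l r c D"
      unfolding exp_thr[OF G] exp_opt[OF G] .
  qed
  define s where "s = sqrt (8 - \<alpha> * (4 - \<alpha>))"
  have h1: "0 \<le> (\<alpha> - 2) * (\<alpha> - 2)" by simp
  have h2: "(\<alpha> - 2) * (\<alpha> - 2) = (8 - \<alpha> * (4 - \<alpha>)) - 4" by (simp add: algebra_simps)
  have q4: "4 \<le> 8 - \<alpha> * (4 - \<alpha>)" using h1 h2 by linarith
  have nn: "0 \<le> 8 - \<alpha> * (4 - \<alpha>)" using q4 by linarith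
  have s2: "2 \<le> s"
  proof -
    from q4 have "sqrt 4 \<le> s" unfolding s_def by (rule real_sqrt_le_mono)
    then show ?thesis by simp
  qed
  have ssq: "s * s = 8 - \<alpha> * (4 - \<alpha>)" unfolding s_def real_sqrt_mult_self abs_of_nonneg[OF nn] ..
  define d where "d = 2 / (\<alpha> + s)"
  have as: "3 \<le> \<alpha> + s" using s2 assms(2) by linarith
  have d0: "0 < d" unfolding d_def using as by simp
  have d1: "d \<le> 1" unfolding d_def using as by simp
  have inv: "1 / d = (\<alpha> + s) / 2" unfolding d_def by simp
  have other: "\<alpha> + (2 - \<alpha>) * d \<le> (\<alpha> + s) / 2"
  proof -
    have "(\<alpha> + (2 - \<alpha>) * d) * (2 * (\<alpha> + s)) = 2 * \<alpha> * (\<alpha> + s) + 4 * (2 - \<alpha>)"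
      unfolding d_def using as by (simp add: field_simps)
    also have "\<dots> = (\<alpha> + s) * (\<alpha> + s)" using ssq by (simp add: algebra_simps)
    finally have e: "(\<alpha> + (2 - \<alpha>) * d) * (2 * (\<alpha> + s)) = (\<alpha> + s) * (\<alpha> + s)" .
    have e2: "((\<alpha> + (2 - \<alpha>) * d) * 2) * (\<alpha> + s) = (\<alpha> + s) * (\<alpha> + s)"
      using e by (simp only: mult.assoc)
    have nz: "\<alpha> + s \<noteq> 0" using as by linarith
    have "(\<alpha> + (2 - \<alpha>) * d) * 2 = \<alpha> + s" using mult_right_cancel[OF nz] e2 by blast
    then have "\<alpha> + (2 - \<alpha>) * d = (\<alpha> + s) / 2" by (simp add: field_simps)
    then show ?thesis by simp
  qed
  have mx: "max (1 / d) (\<alpha> + (2 - \<alpha>) * d) = (\<alpha> + s) / 2" using inv other by simp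
  show ?thesis
  proof (intro conjI allI impI)
    fix d x VC Q assume "0 < d \<and> d \<le> 1 \<and> threshold_steps E l r c D \<alpha> d x VC Q"
    then show "expected_threshold E l r c D Q \<le> max (1 / d) (\<alpha> + (2 - \<alpha>) * d) * expected_opt E l r c D"
      using P1 by blast
  next
    fix x VC Q assume T: "threshold_steps E l r c D \<alpha> (2 / (\<alpha> + sqrt (8 - \<alpha> * (4 - \<alpha>)))) x VC Q"
    have "expected_threshold E l r c D Q \<le> max (1 / d) (\<alpha> + (2 - \<alpha>) * d) * expected_opt E l r c D"
      using P1[OF d0 d1] T unfolding d_def s_def by blast
    then show "expected_threshold E l r c D Q \<le> (\<alpha> + sqrt (8 - \<alpha> * (4 - \<alpha>))) / 2 * expected_opt E l r c D"
      unfolding mx s_def .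
  qed
qed


end
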